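(* For all integers $c$, $n$, and $d$ with $n\ge 1$ and $d\ge 2$, there is a set $A$ of integers with $|A|=2n+2$ such that (i) $[c,c+n]\subseteq 2A$; (ii) $|x-y|\ge d$ for all $x,y\in 2A$ with $x\ne y$ and $x\notin[c,c+n]$; (iii) $\ell^{\sharp}_2(A)=n$.
   Context: For integers $a<b$, $[a,b]=\{j\in\mathbf{Z}: a\le j\le b\}$ is an interval of integers. $2A=\{a+a': a,a'\in A\}$. For a nonempty finite set $A\subseteq\mathbf{Z}$, $\ell^{\sharp}_2(A)$ is the largest integer $n\ge1$ such that $[c,c+n]\subseteq 2A$ for some $c\in\mathbf{Z}$ (undefined if $2A$ contains no interval). *)

theory Defs
  imports Main
begin

definition sumset2 :: "int set \<Rightarrow> int set" where
  "sumset2 A = {a + a' | a a'. a \<in> A \<and> a' \<in> A}"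

text \<open>Largest integer m \<ge> 1 such that some interval [c, c+m] lies in 2A
  (meaningful only when such an interval exists and 2A is finite).\<close>
definition ell_sharp2 :: "int set \<Rightarrow> int" where
  "ell_sharp2 A = (GREATEST m. m \<ge> 1 \<and> (\<exists>c. {c..c+m} \<subseteq> sumset2 A))"

end

theory Submission
  imports Defs
begin

lemma p4_mono: "a < b \<Longrightarrow> (4::int)^a * 4 \<le> 4^b"
  by (metis Suc_leI power_Suc2 power_increasing zero_le_numeral one_le_numeral linorder_not_less less_numeral_extra(1) order_refl)

lemma p4_pos: "(0::int) < 4^a" by simp

lemma sum_range: "i \<le> j \<Longrightarrow> (4::int)^j < 4^i + 4^j \<and> (4::int)^i + 4^j \<le> 2 * 4^j"
proof -
  assume "i \<le> j"
  then have "(4::int)^i \<le> 4^j" by (simp add: power_increasing)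
  then show ?thesis by simp
qed

lemma diff_range: "l < k \<Longrightarrow> 3 * (4::int)^(k-1) \<le> 4^k - 4^l \<and> (4::int)^k - 4^l < 4^k"
proof -
  assume a: "l < k"
  then have "(4::int)^l \<le> 4^(k-1)" by (simp add: power_increasing)
  moreover have "(4::int)^k = 4 * 4^(k-1)" using a
    by (metis Suc_pred' gr_zeroI less_zeroE power_Suc)
  ultimately show ?thesis by simp
qed

lemma L3: "(4::int)^i + 4^j \<noteq> 4^k - 4^l"
proof
  assume e: "(4::int)^i + 4^j = 4^k - 4^l"
  show False
  proof (cases "l < k")
    case False
    then have "(4::int)^k \<le> 4^l" by (simp add: power_increasing)
    then show False using e p4_pos[of i] p4_pos[of j] by linarith
  next
    case True
    note D = diff_range[OF True]
    define M where "M = max i j"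
    have S: "(4::int)^M < 4^i + 4^j \<and> (4::int)^i + 4^j \<le> 2 * 4^M"
      using sum_range[of i j] sum_range[of j i] unfolding M_def
      by (cases "i \<le> j") (auto simp: max_def add.commute)
    show False
    proof (cases "k \<le> M")
      case True
      then have "(4::int)^k \<le> 4^M" by (simp add: power_increasing)
      then show False using S D e by linarith
    next
      case False
      then have "(4::int)^M \<le> 4^(k-1)" by (simp add: power_increasing)
      then show False using S D e by linarith
    qed
  qed
qed

lemma diff_top: "l < k \<Longrightarrow> l' < k' \<Longrightarrow> (4::int)^k - 4^l = 4^k' - 4^l' \<Longrightarrow> k = k'"
proof (rule ccontr)
  assume a: "l < k" "l' < k'" "(4::int)^k - 4^l = 4^k' - 4^l'" "k \<noteq> k'"
  {
    fix k l k' l' :: nat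
    assume "l < k" "l' < k'" "(4::int)^k - 4^l = 4^k' - 4^l'" "k < k'"
    then have "(4::int)^k \<le> 4^(k'-1)" by (simp add: power_increasing)
    then have False using diff_range[OF \<open>l < k\<close>] diff_range[OF \<open>l' < k'\<close>] \<open>(4::int)^k - 4^l = 4^k' - 4^l'\<close> p4_pos[of "k'-1"] by linarith
  } note * = this
  show False
  proof (cases "k < k'")
    case True then show False using * a by blast
  next
    case False then have "k' < k" using a by simp
    then show False using * a by (metis)
  qed
qed

lemma L2: "i \<noteq> j \<Longrightarrow> k \<noteq> l \<Longrightarrow> (4::int)^i - 4^j = 4^k - 4^l \<Longrightarrow> j = l"
proof -
  assume a: "i \<noteq> j" "k \<noteq> l" and e: "(4::int)^i - 4^j = 4^k - 4^l"
  have inj: "\<And>a b. (4::int)^a = 4^b \<Longrightarrow> a = b" by simp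
  show "j = l"
  proof (cases "j < i")
    case True
    then have "(4::int)^j < 4^i" by simp
    then have "l < k"
      using e by (metis a(2) linorder_neqE_nat power_strict_increasing_iff diff_gt_0_iff_gt
          order_less_imp_not_less one_less_numeral_iff semiring_norm(76))
    then have "i = k" using diff_top[OF True _ e] by simp
    then show ?thesis using e inj by simp
  next
    case False
    then have ji: "i < j" using a by simp
    then have "(4::int)^i < 4^j" by simp
    have "(4::int)^j - 4^i = 4^l - 4^k" using e by simp
    moreover have "k < l"
      using e \<open>(4::int)^i < 4^j\<close> by (metis a(2) linorder_neqE_nat power_strict_increasing_iff
          diff_gt_0_iff_gt order_less_imp_not_less one_less_numeral_iff semiring_norm(76))
    ultimately show ?thesis using diff_top[OF ji] by blast
  qed
qed

lemma L1: "(4::int)^i + 4^j = 4^k + 4^l \<Longrightarrow> i + j = k + l"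
proof -
  assume e: "(4::int)^i + 4^j = 4^k + 4^l"
  have S: "\<And>i j. (4::int)^(max i j) < 4^i + 4^j \<and> (4::int)^i + 4^j \<le> 2 * 4^(max i j)"
    subgoal for i j
      using sum_range[of i j] sum_range[of j i]
      by (cases "i \<le> j") (auto simp: max_def add.commute)
    done
  have M: "max i j = max k l"
  proof (rule ccontr)
    assume "max i j \<noteq> max k l"
    {
      fix i j k l :: nat
      assume "(4::int)^i + 4^j = 4^k + 4^l" "max i j < max k l"
      then have "(4::int)^(max i j) * 4 \<le> 4^(max k l)" using p4_mono by blast
      then have False using S[of i j] S[of k l] \<open>(4::int)^i + 4^j = 4^k + 4^l\<close> by linarith
    } note * = this
    then show False using e \<open>max i j \<noteq> max k l\<close>
      by (metis linorder_neqE_nat)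
  qed
  have inj: "\<And>a b. (4::int)^a = 4^b \<Longrightarrow> a = b" by simp
  show ?thesis
    using M e inj unfolding max_def
    by (cases "i \<le> j"; cases "k \<le> l") (auto simp: add.commute)
qed


definition tt :: "nat \<Rightarrow> nat \<Rightarrow> nat \<Rightarrow> int" where
  "tt k i j = (if k = 0 then 4^i + 4^j else if k = 1 then 4^i - 4^j else -(4^i + 4^j))"

definition rr :: "int \<Rightarrow> nat \<Rightarrow> nat \<Rightarrow> nat \<Rightarrow> int" where
  "rr c k i j = (if k = 0 then 0 else if k = 1 then c + int j else 2*c + int i + int j)"

lemma tt0: "k \<le> 2 \<Longrightarrow> tt k i j = 0 \<Longrightarrow> k = 1 \<and> i = j"
proof -
  assume "k \<le> 2" "tt k i j = 0"
  moreover have "(0::int) < 4^i" "(0::int) < 4^j" by simp_all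
  ultimately show ?thesis unfolding tt_def
    by (cases "k = 0"; cases "k = 1") (auto split: if_splits)
qed

lemma tt_inj: "k \<le> 2 \<Longrightarrow> k' \<le> 2 \<Longrightarrow> tt k i j = tt k' i' j' \<Longrightarrow> tt k i j \<noteq> 0
  \<Longrightarrow> rr c k i j = rr c k' i' j'"
proof -
  assume a: "k \<le> 2" "k' \<le> 2" "tt k i j = tt k' i' j'" "tt k i j \<noteq> 0"
  have pos: "\<And>a. (0::int) < 4^a" by simp
  have k: "k = 0 \<or> k = 1 \<or> k = 2" "k' = 0 \<or> k' = 1 \<or> k' = 2" using a by auto
  have ij: "k = 1 \<Longrightarrow> i \<noteq> j" using a(4) unfolding tt_def by auto
  have ij': "k' = 1 \<Longrightarrow> i' \<noteq> j'" using a(3,4) unfolding tt_def by auto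
  have L3': "\<And>i j k l. -((4::int)^i + 4^j) \<noteq> 4^k - 4^l"
    using L3 by (metis minus_diff_eq neg_equal_iff_equal)
  have P: "\<And>i j i' j'. (4::int)^i + 4^j \<noteq> -(4^i' + 4^j')"
    by (metis add_pos_pos neg_less_0_iff_less order_less_asym pos)
  from k show ?thesis
  proof (elim disjE)
    assume "k = 0" "k' = 0" then show ?thesis unfolding rr_def by simp
  next
    assume "k = 0" "k' = 1" then show ?thesis using a(3) L3 unfolding tt_def by simp
  next
    assume "k = 0" "k' = 2" then show ?thesis using a(3) P unfolding tt_def by simp
  next
    assume "k = 1" "k' = 0" then show ?thesis using a(3) L3 unfolding tt_def by (metis one_neq_zero)
  next
    assume "k = 1" "k' = 1" then show ?thesis using a(3) L2[of i j i' j'] ij ij' unfolding tt_def rr_def by simp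
  next
    assume "k = 1" "k' = 2" then have "(4::int)^i - 4^j = -(4^i' + 4^j')" using a(3) unfolding tt_def by simp
    then show ?thesis using L3' by metis
  next
    assume "k = 2" "k' = 0" then have "(4::int)^i' + 4^j' = -(4^i + 4^j)" using a(3) unfolding tt_def by simp
    then show ?thesis using P by metis
  next
    assume "k = 2" "k' = 1" then have "(4::int)^i' - 4^j' = -(4^i + 4^j)" using a(3) unfolding tt_def by simp
    then show ?thesis using L3' by metis
  next
    assume "k = 2" "k' = 2" then show ?thesis using a(3) L1[of i j i' j'] unfolding tt_def rr_def by simp
  qed
qed


lemma sep:
  fixes r1 r2 t1 t2 N R d :: int
  assumes "\<bar>r1\<bar> \<le> R" "\<bar>r2\<bar> \<le> R" "t1 \<noteq> t2" "N \<ge> 2*R + d" "N \<ge> 0"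
  shows "\<bar>(r1 + N*t1) - (r2 + N*t2)\<bar> \<ge> d"
proof -
  have "\<bar>t1 - t2\<bar> \<ge> 1" using assms(3) by linarith
  then have "N * 1 \<le> N * \<bar>t1 - t2\<bar>" using assms(5) by (intro mult_left_mono) auto
  then have "\<bar>N*(t1 - t2)\<bar> \<ge> N" using assms(5) by (simp add: abs_mult)
  then show ?thesis using assms by (simp add: algebra_simps)
qed

lemma rr_bound: "i \<le> m \<Longrightarrow> j \<le> m \<Longrightarrow> \<bar>rr c k i j\<bar> \<le> 2*\<bar>c\<bar> + 2*int m"
  unfolding rr_def by auto

theorem mainTheorem4:
  fixes c n d :: int
  assumes "n \<ge> 1" and "d \<ge> 2"
  shows "\<exists>A :: int set. finite A \<and> card A = nat (2*n + 2)
           \<and> {c..c+n} \<subseteq> sumset2 A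
           \<and> (\<forall>x\<in>sumset2 A. \<forall>y\<in>sumset2 A. x \<noteq> y \<and> x \<notin> {c..c+n} \<longrightarrow> \<bar>x - y\<bar> \<ge> d)
           \<and> ell_sharp2 A = n"
proof -
  define m where "m = nat n"
  have nm: "n = int m" using assms(1) unfolding m_def by simp
  define N where "N = 4*\<bar>c\<bar> + 4*n + d + 1"
  have Npos: "N > 0" and Nbig: "N \<ge> 2*(2*\<bar>c\<bar> + 2*int m) + d" "N > \<bar>c\<bar> + int m"
    using assms unfolding N_def nm by auto
  define X where "X = (\<lambda>i. N * 4^i) ` {..m}"
  define Y where "Y = (\<lambda>i. c + int i - N * 4^i) ` {..m}"
  define A where "A = X \<union> Y"
  have injX: "inj_on (\<lambda>i. N * (4::int)^i) {..m}"
    using Npos by (intro inj_onI) simp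
  have mono: "(\<lambda>i. N * (4::int)^i - int i) n1 < (\<lambda>i. N * 4^i - int i) n2" if "n1 < n2" for n1 n2
  proof (rule lift_Suc_mono_less[OF _ that])
    fix k
    have "(4::int)^k \<ge> 1" by simp
    then have "N * 4^k \<ge> N * 1" using Npos by (intro mult_left_mono) auto
    then have "N * (4::int)^k \<ge> 1" using Npos by linarith
    moreover have "N * (4::int)^(Suc k) = 4 * (N * 4^k)" by simp
    ultimately show "N * (4::int)^k - int k < N * 4^(Suc k) - int (Suc k)"
      by linarith
  qed
  have injY: "inj_on (\<lambda>i. c + int i - N * (4::int)^i) {..m}"
  proof (rule inj_onI)
    fix a b assume "c + int a - N * (4::int)^a = c + int b - N * 4^b"
    then have e: "N * (4::int)^a - int a = N * 4^b - int b" by simp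
    show "a = b"
    proof (rule ccontr)
      assume "a \<noteq> b"
      then have "a < b \<or> b < a" by linarith
      then show False using mono[of a b] mono[of b a] e by auto
    qed
  qed
  have Xpos: "x > 0" if "x \<in> X" for x using that Npos unfolding X_def by auto
  have Yneg: "y < 0" if "y \<in> Y" for y
  proof -
    from that obtain i where i: "i \<in> {..m}" "y = c + int i - N * 4^i" unfolding Y_def by (rule imageE)
    have "N * 4^i \<ge> N" using Npos by simp
    moreover have "int i \<le> int m" using i(1) by simp
    ultimately show ?thesis using i(2) Nbig by linarith
  qed
  have disj: "X \<inter> Y = {}" using Xpos Yneg by force
  have fin: "finite A" unfolding A_def X_def Y_def by simp
  have card: "card A = nat (2*n+2)"
    unfolding A_def using card_Un_disjoint[OF _ _ disj] card_image[OF injX] card_image[OF injY]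
    unfolding X_def Y_def nm by simp
  have forms: "\<exists>k i j. k \<le> 2 \<and> i \<le> m \<and> j \<le> m \<and> z = rr c k i j + N * tt k i j"
    if zA: "z \<in> sumset2 A" for z
  proof -
    obtain a a' where z: "z = a + a'" "a \<in> A" "a' \<in> A" using zA unfolding sumset2_def by auto
    show ?thesis
    proof (cases "a \<in> X")
      case True
      then obtain i where i: "i \<le> m" "a = N * 4^i" unfolding X_def by auto
      show ?thesis
      proof (cases "a' \<in> X")
        case True
        then obtain j where j: "j \<le> m" "a' = N * 4^j" unfolding X_def by auto
        show ?thesis using i j z by (intro exI[of _ 0] exI[of _ i] exI[of _ j]) (simp add: rr_def tt_def algebra_simps)
      next
        case False
        then obtain j where j: "j \<le> m" "a' = c + int j - N * 4^j" using z unfolding A_def Y_def by auto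
        show ?thesis using i j z by (intro exI[of _ 1] exI[of _ i] exI[of _ j]) (simp add: rr_def tt_def algebra_simps)
      qed
    next
      case False
      then obtain i where i: "i \<le> m" "a = c + int i - N * 4^i" using z unfolding A_def Y_def by auto
      show ?thesis
      proof (cases "a' \<in> X")
        case True
        then obtain j where j: "j \<le> m" "a' = N * 4^j" unfolding X_def by auto
        show ?thesis using i j z by (intro exI[of _ 1] exI[of _ j] exI[of _ i]) (simp add: rr_def tt_def algebra_simps)
      next
        case False
        then obtain j where j: "j \<le> m" "a' = c + int j - N * 4^j" using z unfolding A_def Y_def by auto
        show ?thesis using i j z by (intro exI[of _ 2] exI[of _ i] exI[of _ j]) (simp add: rr_def tt_def algebra_simps)
      qed
    qed
  qed
  have interval: "{c..c+n} \<subseteq> sumset2 A"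
  proof
    fix z assume "z \<in> {c..c+n}"
    then have zz: "c \<le> z" "z \<le> c + n" by auto
    define j where "j = nat (z - c)"
    have j: "j \<le> m" "z = c + int j" using zz nm unfolding j_def by auto
    have "N * 4^j \<in> A" "c + int j - N * 4^j \<in> A" using j unfolding A_def X_def Y_def by auto
    moreover have "z = N * 4^j + (c + int j - N * 4^j)" using j by simp
    ultimately show "z \<in> sumset2 A" unfolding sumset2_def by blast
  qed
  have sepd: "\<forall>x\<in>sumset2 A. \<forall>y\<in>sumset2 A. x \<noteq> y \<and> x \<notin> {c..c+n} \<longrightarrow> \<bar>x - y\<bar> \<ge> d"
  proof (intro ballI impI)
    fix x y assume xy: "x \<in> sumset2 A" "y \<in> sumset2 A" "x \<noteq> y \<and> x \<notin> {c..c+n}"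
    obtain k i j where x: "k \<le> 2" "i \<le> m" "j \<le> m" "x = rr c k i j + N * tt k i j"
      using forms[OF xy(1)] by blast
    obtain k' i' j' where y: "k' \<le> 2" "i' \<le> m" "j' \<le> m" "y = rr c k' i' j' + N * tt k' i' j'"
      using forms[OF xy(2)] by blast
    have t0: "tt k i j \<noteq> 0"
    proof
      assume "tt k i j = 0"
      then have "k = 1" "i = j" using tt0 x(1) by auto
      then have "x = c + int j" using x \<open>tt k i j = 0\<close> unfolding rr_def by simp
      then show False using xy(3) x(3) nm by auto
    qed
    have "tt k i j \<noteq> tt k' i' j'"
    proof
      assume "tt k i j = tt k' i' j'"
      then have "rr c k i j = rr c k' i' j'" using tt_inj x(1) y(1) t0 by blast
      then show False using xy(3) x y \<open>tt k i j = tt k' i' j'\<close> by simp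
    qed
    then show "\<bar>x - y\<bar> \<ge> d"
      using sep[OF rr_bound[OF x(2,3)] rr_bound[OF y(2,3)] _ Nbig(1)] Npos x(4) y(4) by simp
  qed
  have ell: "ell_sharp2 A = n"
    unfolding ell_sharp2_def
  proof (rule Greatest_equality)
    show "n \<ge> 1 \<and> (\<exists>c'. {c'..c'+n} \<subseteq> sumset2 A)" using assms interval by blast
  next
    fix y assume "y \<ge> 1 \<and> (\<exists>c'. {c'..c'+y} \<subseteq> sumset2 A)"
    then obtain c' where y: "y \<ge> 1" "{c'..c'+y} \<subseteq> sumset2 A" by blast
    have sub: "z \<in> {c..c+n}" if z: "z \<in> {c'..c'+y}" for z
    proof (rule ccontr)
      assume nz: "z \<notin> {c..c+n}"
      define w where "w = (if z = c' then z + 1 else z - 1)"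
      have w: "w \<in> {c'..c'+y}" "w \<noteq> z" "\<bar>z - w\<bar> = 1" using z y(1) unfolding w_def by auto
      have zw: "z \<in> sumset2 A" "w \<in> sumset2 A" using y(2) z w(1) by auto
      have "\<bar>z - w\<bar> \<ge> d" using sepd zw w(2) nz by simp
      then show False using w(3) assms(2) by simp
    qed
    have "c' \<in> {c..c+n}" "c' + y \<in> {c..c+n}" using sub y(1) by auto
    then show "y \<le> n" by auto
  qed
  show ?thesis
    by (rule exI[of _ A], intro conjI, fact fin, fact card, fact interval, fact sepd, fact ell)
qed

end
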